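(* Let $\theta\geq\sigma>0$, $n\geq 1$, $M\ge 1$, $\Upsilon>0$. Then $$\epsilon_{\mathrm{m}}^{\star}(n,M,\Upsilon)\;\geq\;\alpha_{1/M}\bigl(\varphi^n_{\sqrt{\Upsilon},\sigma},\varphi^n_{0,\theta}\bigr).$$
   Context: $\varphi_{\mu,\sigma}(y)=\frac{1}{\sqrt{2\pi}\sigma}e^{-(y-\mu)^2/(2\sigma^2)}$ and $\varphi^n_{\mu,\sigma}$ denotes the distribution on $\mathbb{R}^n$ of $n$ i.i.d. $\mathcal{N}(\mu,\sigma^2)$ coordinates. For distributions $A,B$ on a common space $\mathcal{Z}$ and $\beta\in[0,1]$, $\alpha_\beta(A,B)=\inf\{1-\mathbb{E}_A[T(Z)]:\ T:\mathcal{Z}\to[0,1]\text{ measurable},\ \mathbb{E}_B[T(Z)]\le\beta\}$. AWGN channel with noise variance $\sigma^2$: input $\mathbf{x}\in\mathbb{R}^n$, output density $\prod_i\varphi_{x_i,\sigma}(y_i)$. For a codebook $\mathcal{C}=\{\mathbf{c}_1,\dots,\mathbf{c}_M\}\subset\mathbb{R}^n$ with uniformly distributed message and maximum-likelihood decoding, $P_e(\mathcal{C})$ is the average error probability. $\epsilon_{\mathrm{m}}^{\star}(n,M,\Upsilon)=\inf\{P_e(\mathcal{C}):\|\mathbf{c}_i\|^2\le n\Upsilon\ \forall i\}$. *)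

theory Defs
  imports "HOL-Probability.Probability"
begin

definition gauss_vec_density :: "real \<Rightarrow> real \<Rightarrow> real ^ 'n \<Rightarrow> real" where
  "gauss_vec_density \<mu> \<sigma> y = (\<Prod>i\<in>UNIV. normal_density \<mu> \<sigma> (y $ i))"

definition gauss_vec :: "real \<Rightarrow> real \<Rightarrow> (real ^ 'n) measure" where
  "gauss_vec \<mu> \<sigma> = density lborel (\<lambda>y. ennreal (gauss_vec_density \<mu> \<sigma> y))"

definition alpha_beta :: "real \<Rightarrow> 'a measure \<Rightarrow> 'a measure \<Rightarrow> real" where
  "alpha_beta \<beta> A B = Inf {1 - integral\<^sup>L A T | T.
      T \<in> borel_measurable A \<and> sets B = sets A \<and> (\<forall>z \<in> space A. 0 \<le> T z \<and> T z \<le> 1)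
      \<and> integral\<^sup>L B T \<le> \<beta>}"

definition awgn_lik :: "real \<Rightarrow> real ^ 'n \<Rightarrow> real ^ 'n \<Rightarrow> real" where
  "awgn_lik \<sigma> x y = (\<Prod>i\<in>UNIV. normal_density (x $ i) \<sigma> (y $ i))"

definition ml_decode :: "real \<Rightarrow> nat \<Rightarrow> (nat \<Rightarrow> real ^ 'n) \<Rightarrow> real ^ 'n \<Rightarrow> nat" where
  "ml_decode \<sigma> M c y = (LEAST i. i < M \<and> (\<forall>j<M. awgn_lik \<sigma> (c j) y \<le> awgn_lik \<sigma> (c i) y))"

definition Pe :: "real \<Rightarrow> nat \<Rightarrow> (nat \<Rightarrow> real ^ 'n) \<Rightarrow> real" where
  "Pe \<sigma> M c = (1 / real M) * (\<Sum>i<M.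
      measure (density lborel (\<lambda>y. ennreal (awgn_lik \<sigma> (c i) y))) {y. ml_decode \<sigma> M c y \<noteq> i})"

definition eps_m_star :: "'n::finite itself \<Rightarrow> real \<Rightarrow> nat \<Rightarrow> real \<Rightarrow> real" where
  "eps_m_star _ \<sigma> M \<Upsilon> = Inf {Pe \<sigma> M (c :: nat \<Rightarrow> real ^ 'n) | c.
      \<forall>i<M. (norm (c i))\<^sup>2 \<le> real CARD('n) * \<Upsilon>}"

end

theory Submission
  imports Defs "HOL-Analysis.Analysis"
begin


typedef ('a::finite) idx = "{..<CARD('a)}"
  by (rule exI[of _ 0]) (simp add: finite_UNIV_card_ge_0)

instance idx :: (finite) finite
proof
  have "(UNIV :: 'a idx set) = Abs_idx ` {..<CARD('a)}"
    by (metis Rep_idx_inverse Rep_idx image_eqI UNIV_eq_I)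
  then show "finite (UNIV :: 'a idx set)" by (metis finite_imageI finite_lessThan)
qed

instantiation idx :: (finite) linorder
begin
definition less_eq_idx :: "'a idx \<Rightarrow> 'a idx \<Rightarrow> bool" where "less_eq_idx x y = (Rep_idx x \<le> Rep_idx y)"
definition less_idx :: "'a idx \<Rightarrow> 'a idx \<Rightarrow> bool" where "less_idx x y = (Rep_idx x < Rep_idx y)"
instance by standard (auto simp: less_eq_idx_def less_idx_def Rep_idx_inject)
end

instance idx :: (finite) wellorder
proof
  fix P :: "'a idx \<Rightarrow> bool" and a
  assume step: "\<And>x. (\<And>y. y < x \<Longrightarrow> P y) \<Longrightarrow> P x"
  have "\<forall>x. Rep_idx x = n \<longrightarrow> P x" for n
    by (induction n rule: less_induct) (metis step less_idx_def)
  then show "P a" by blast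
qed

lemma card_idx: "CARD('a::finite idx) = CARD('a)"
proof -
  have "bij_betw Rep_idx (UNIV :: 'a idx set) {..<CARD('a)}"
    by (metis Rep_idx_inject bij_betw_def inj_on_def type_definition.Rep_range type_definition_idx)
  then show ?thesis by (simp add: bij_betw_same_card)
qed


lemma prod_Basis_cart: fixes x :: "real^'n" shows "(\<Prod>b\<in>Basis. x \<bullet> b) = (\<Prod>i\<in>UNIV. x $ i)"
  by (simp add: Basis_vec_def cart_eq_inner_axis axis_eq_axis prod.UNION_disjoint)

lemma lborel_perm:
  fixes e :: "'a::finite \<Rightarrow> 'b::finite" assumes e: "bij e"
  shows "distr lborel borel (\<lambda>x::real^'a. (\<chi> j. x $ inv e j) :: real^'b) = lborel"
proof (rule lborel_eqI[symmetric])
  let ?P = "\<lambda>x::real^'a. (\<chi> j. x $ inv e j) :: real^'b"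
  have meas: "?P \<in> borel_measurable borel"
    by (intro borel_measurable_continuous_onI continuous_intros)
  fix l u :: "real^'b" assume le: "\<And>b. b\<in>Basis \<Longrightarrow> l\<bullet>b \<le> u\<bullet>b"
  have le': "l$j \<le> u$j" for j
  proof -
    have "axis j (1::real) \<in> Basis" by (auto simp: Basis_vec_def)
    from le[OF this] show ?thesis by (simp add: cart_eq_inner_axis)
  qed
  have ie: "inv e (e i) = i" "e (inv e j) = j" for i j
    using e by (auto simp: bij_def inv_f_f surj_f_inv_f)
  have pre: "?P -` box l u = box (\<chi> i. l $ e i) (\<chi> i. u $ e i)"
  proof -
    have "(\<forall>j. l $ j < x $ inv e j \<and> x $ inv e j < u $ j) \<longleftrightarrow> (\<forall>i. l $ e i < x $ i \<and> x $ i < u $ e i)" for x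
      by (metis ie)
    then show ?thesis by (auto simp: mem_box_cart)
  qed
  have "emeasure (distr lborel borel ?P) (box l u) = emeasure lborel (box (\<chi> i. l $ e i) (\<chi> i. u $ e i) :: (real^'a) set)"
    using meas by (simp add: emeasure_distr pre)
  also have "\<dots> = (\<Prod>i\<in>UNIV. u $ e i - l $ e i)"
  proof -
    have "b \<in> Basis \<Longrightarrow> (\<chi> i. l $ e i) \<bullet> b \<le> (\<chi> i. u $ e i) \<bullet> b" for b :: "real^'a"
      using le' by (auto simp: inner_axis Basis_vec_def)
    from emeasure_lborel_box[OF this] show ?thesis by (simp add: prod_Basis_cart)
  qed
  also have "\<dots> = (\<Prod>j\<in>UNIV. u $ j - l $ j)"
    using prod.reindex_bij_betw[of e UNIV UNIV "\<lambda>j. u $ j - l $ j"] e by (simp add: bij_betw_def bij_def)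
  also have "\<dots> = (\<Prod>b\<in>Basis. (u - l) \<bullet> b)"
    by (simp add: prod_Basis_cart)
  finally show "emeasure (distr lborel borel ?P) (box l u) = (\<Prod>b\<in>Basis. (u - l) \<bullet> b)"
    by simp
qed simp


lemma lborel_orth:
  fixes G :: "real^'m::{finite,wellorder} \<Rightarrow> real^'m::_"
  assumes G: "orthogonal_transformation G" and inv: "\<And>x. G (G x) = x"
  shows "distr lborel borel G = lborel"
proof (rule lborel_eqI[symmetric])
  have lin: "linear G" using G orthogonal_transformation_linear by blast
  have meas: "G \<in> borel_measurable borel"
    using lin by (intro borel_measurable_continuous_onI linear_continuous_on linear_conv_bounded_linear[THEN iffD1])
  fix l u :: "real^'m::_" assume le: "\<And>b. b\<in>Basis \<Longrightarrow> l\<bullet>b \<le> u\<bullet>b"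
  have pre: "G -` box l u = G ` box l u"
    using inv by (auto simp: image_iff) (metis)
  have bm: "G ` box l u \<in> sets borel"
    unfolding pre[symmetric] using measurable_sets[OF meas, of "box l u"] by simp
  have "emeasure (distr lborel borel G) (box l u) = emeasure lborel (G ` box l u)"
    using meas by (simp add: emeasure_distr pre)
  also have "\<dots> = emeasure lebesgue (G ` box l u)"
    using bm by (simp add: emeasure_completion)
  also have "\<dots> = measure lebesgue (G ` box l u)"
    using measurable_orthogonal_image[OF G lmeasurable_box] by (simp add: emeasure_eq_measure2)
  also have "\<dots> = measure lebesgue (box l u)"
    using measure_orthogonal_image[OF G lmeasurable_box] by simp
  also have "\<dots> = emeasure lebesgue (box l u)"
    using lmeasurable_box by (simp add: emeasure_eq_measure2)
  also have "\<dots> = emeasure lborel (box l u)"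
    by (simp add: emeasure_completion)
  also have "\<dots> = (\<Prod>b\<in>Basis. (u - l) \<bullet> b)"
    using le by simp
  finally show "emeasure (distr lborel borel G) (box l u) = (\<Prod>b\<in>Basis. (u - l) \<bullet> b)" .
qed simp


definition hrefl :: "real^'n \<Rightarrow> real^'n \<Rightarrow> real^'n" where
  "hrefl u v = v - (2 * (v \<bullet> u) / (u \<bullet> u)) *\<^sub>R u"

lemma hrefl_inner: "hrefl u v \<bullet> hrefl u w = v \<bullet> w"
proof (cases "u = 0")
  case False
  then have "u \<bullet> u \<noteq> 0" by simp
  then show ?thesis
    by (simp add: hrefl_def inner_diff_left inner_diff_right field_simps inner_commute)
qed (simp add: hrefl_def)

lemma hrefl_invol: "hrefl u (hrefl u v) = v"
proof (cases "u = 0")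
  case False
  then have "u \<bullet> u \<noteq> 0" by simp
  then show ?thesis
    by (simp add: hrefl_def inner_diff_left scaleR_diff_left)
qed (simp add: hrefl_def)

lemma linear_hrefl: "linear (hrefl u)"
  by (rule linearI) (simp_all add: hrefl_def inner_add_left add_divide_distrib scaleR_add_left algebra_simps)

lemma lborel_hrefl:
  fixes u :: "real^'n::finite"
  shows "distr lborel borel (hrefl u) = lborel"
proof -
  obtain e :: "'n \<Rightarrow> 'n idx" where e: "bij e"
    using finite_same_card_bij[of "UNIV :: 'n set" "UNIV :: 'n idx set"] card_idx[where 'a='n] by auto
  have ie: "inv e (e i) = i" "e (inv e j) = j" for i j
    using e by (auto simp: bij_def inv_f_f surj_f_inv_f)
  define \<Phi> where "\<Phi> = (\<lambda>x::real^'n. (\<chi> j. x $ inv e j) :: real^'n idx)"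
  define \<Psi> where "\<Psi> = (\<lambda>y::real^'n idx. (\<chi> i. y $ e i) :: real^'n)"
  have PP: "\<Phi> (\<Psi> y) = y" "\<Psi> (\<Phi> x) = x" for x y
    by (simp_all add: \<Phi>_def \<Psi>_def vec_eq_iff ie)
  have dPhi: "distr lborel borel \<Phi> = lborel"
    unfolding \<Phi>_def by (rule lborel_perm[OF e])
  have dPsi: "distr lborel borel \<Psi> = lborel"
    using lborel_perm[OF bij_imp_bij_inv[OF e]] by (simp add: \<Psi>_def inv_inv_eq[OF e])
  have linPhi: "linear \<Phi>" by (rule linearI) (simp_all add: \<Phi>_def vec_eq_iff)
  have linPsi: "linear \<Psi>" by (rule linearI) (simp_all add: \<Psi>_def vec_eq_iff)
  have inPhi: "\<Phi> x \<bullet> \<Phi> y = x \<bullet> y" for x y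
    using sum.reindex_bij_betw[of "inv e" UNIV UNIV "\<lambda>i. x $ i * y $ i"] bij_imp_bij_inv[OF e]
    by (simp add: \<Phi>_def inner_vec_def bij_betw_def bij_def)
  have inPsi: "\<Psi> x \<bullet> \<Psi> y = x \<bullet> y" for x y
    by (metis PP(1) inPhi)
  define G where "G = \<Phi> \<circ> hrefl u \<circ> \<Psi>"
  have linG: "linear G" unfolding G_def
    by (intro linear_compose linPhi linPsi linear_hrefl)
  have orthG: "orthogonal_transformation G"
    unfolding orthogonal_transformation_def using linG by (simp add: G_def inPhi inPsi hrefl_inner)
  have invG: "G (G y) = y" for y by (simp add: G_def PP hrefl_invol)
  have dG: "distr lborel borel G = lborel" by (rule lborel_orth[OF orthG invG])
  have mb: "f \<in> borel_measurable borel" if "linear f" for f :: "'a::euclidean_space \<Rightarrow> 'b::euclidean_space"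
    using that by (intro borel_measurable_continuous_onI linear_continuous_on linear_conv_bounded_linear[THEN iffD1])
  have eq: "hrefl u = \<Psi> \<circ> G \<circ> \<Phi>" by (rule ext) (simp add: G_def PP)
  have "distr lborel borel (\<Psi> \<circ> G \<circ> \<Phi>) = distr (distr (distr lborel borel \<Phi>) borel G) borel \<Psi>"
    using mb[OF linPhi] mb[OF linPsi] mb[OF linG]
    by (simp add: distr_distr comp_assoc)
  then show ?thesis by (simp add: eq dPhi dG dPsi)
qed


definition arefl :: "real^'n \<Rightarrow> real^'n \<Rightarrow> real^'n \<Rightarrow> real^'n" where
  "arefl a c z = hrefl (a - c) (z - (1/2) *\<^sub>R (a + c)) + (1/2) *\<^sub>R (a + c)"

lemma arefl_invol: "arefl a c (arefl a c z) = z"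
  by (simp add: arefl_def hrefl_invol)

lemma linear_borel_meas: "linear f \<Longrightarrow> (f::'x::euclidean_space \<Rightarrow> 'y::euclidean_space) \<in> borel_measurable borel"
  by (intro borel_measurable_continuous_onI linear_continuous_on linear_conv_bounded_linear[THEN iffD1])

lemma lborel_arefl: "distr lborel borel (arefl a c) = lborel"
proof -
  let ?m = "(1/2) *\<^sub>R (a + c)"
  have eq: "arefl a c = (+) ?m \<circ> hrefl (a - c) \<circ> (+) (- ?m)"
    by (rule ext) (simp add: arefl_def)
  have "distr lborel borel ((+) ?m \<circ> hrefl (a - c) \<circ> (+) (- ?m)) =
        distr (distr (distr lborel borel ((+) (- ?m))) borel (hrefl (a - c))) borel ((+) ?m)"
    using linear_borel_meas[OF linear_hrefl[of "a - c"]]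
    by (simp add: distr_distr comp_assoc)
  then show ?thesis by (simp add: eq lborel_distr_plus lborel_hrefl)
qed

lemma continuous_on_hrefl[continuous_intros]:
  "continuous_on S f \<Longrightarrow> continuous_on S (\<lambda>x. hrefl u (f x))"
  by (rule continuous_on_compose2[of UNIV "hrefl u"])
     (auto intro: linear_continuous_on linear_conv_bounded_linear[THEN iffD1] linear_hrefl)

lemma arefl_meas: "arefl a c \<in> borel_measurable borel"
  unfolding arefl_def
  by (intro borel_measurable_continuous_onI continuous_intros)

lemma hrefl_sq: "(norm (hrefl u v + p))\<^sup>2 = (norm (v + p))\<^sup>2 - 2 * (2 * (v \<bullet> u) / (u \<bullet> u)) * (p \<bullet> u)"
proof (cases "u = 0")
  case True then show ?thesis by (simp add: hrefl_def)
next
  case False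
  define t where "t = 2 * (v \<bullet> u) / (u \<bullet> u)"
  have tw: "t * (u \<bullet> u) = 2 * (v \<bullet> u)" using False by (simp add: t_def)
  have "(norm (v - t *\<^sub>R u + p))\<^sup>2 = (norm (v + p))\<^sup>2 - 2 * t * (v \<bullet> u + p \<bullet> u) + t * (t * (u \<bullet> u))"
    unfolding power2_norm_eq_inner by (simp add: inner_simps inner_commute algebra_simps)
  also have "\<dots> = (norm (v + p))\<^sup>2 - 2 * t * (p \<bullet> u)"
    unfolding tw by (simp add: algebra_simps)
  finally show ?thesis by (simp add: hrefl_def t_def)
qed

lemma half_sR[simp]: "(1/2::real) *\<^sub>R x + (1/2) *\<^sub>R x = (x::'a::real_vector)"
  using scaleR_add_left[of "1/2" "1/2" x] by simp

lemma aux_half: "(u::'a::real_inner) \<bullet> u \<noteq> 0 \<Longrightarrow> 2 * (2 * (v \<bullet> u) / (u \<bullet> u)) * ((- (1/2)) *\<^sub>R u \<bullet> u) = - 2 * (v \<bullet> u)"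
proof -
  assume w: "u \<bullet> u \<noteq> 0"
  have "((- (1/2)) *\<^sub>R u \<bullet> u) = - (1/2) * (u \<bullet> u)" by (simp only: inner_scaleR_left)
  then show ?thesis using w by simp
qed

lemma half_diff_sq: "(norm (v + (1/2) *\<^sub>R u))\<^sup>2 - (norm (v - (1/2) *\<^sub>R u))\<^sup>2 = 2 * (v \<bullet> (u::'a::real_inner))"
  unfolding power2_norm_eq_inner by (simp add: inner_simps inner_commute algebra_simps)

lemma hrefl_fix: "v \<bullet> u = 0 \<Longrightarrow> hrefl u v = v"
  by (simp add: hrefl_def)

lemma arefl_dist: "norm (arefl a c z - a) = norm (z - c)"
proof -
  let ?u = "a - c" and ?v = "z - (1/2) *\<^sub>R (a + c)"
  have eq: "arefl a c z - a = hrefl ?u ?v + (- (1/2) *\<^sub>R ?u)"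
    unfolding arefl_def vec_eq_iff by (simp add: algebra_simps)
  have "(norm (arefl a c z - a))\<^sup>2 = (norm (hrefl ?u ?v + (- (1/2) *\<^sub>R ?u)))\<^sup>2"
    by (simp only: eq)
  also have "\<dots> = (norm (?v + (- (1/2) *\<^sub>R ?u)))\<^sup>2 - 2 * (2 * (?v \<bullet> ?u) / (?u \<bullet> ?u)) * ((- (1/2) *\<^sub>R ?u) \<bullet> ?u)"
    by (rule hrefl_sq)
  also have "\<dots> = (norm (z - c))\<^sup>2"
  proof (cases "?u = 0")
    case True
    then have "a = c" by simp
    have v: "?v = z - c" unfolding vec_eq_iff using \<open>a = c\<close> by simp
    have u: "?u = 0" using True by simp
    show ?thesis by (simp only: u v scaleR_zero_right add_0_right inner_zero_left inner_zero_right mult_zero_right diff_0_right)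
  next
    case False
    then have "?u \<bullet> ?u \<noteq> 0" by simp
    then have "2 * (2 * (?v \<bullet> ?u) / (?u \<bullet> ?u)) * ((- (1/2) *\<^sub>R ?u) \<bullet> ?u) = - 2 * (?v \<bullet> ?u)"
      by (rule aux_half)
    moreover have "(norm (?v + (- (1/2) *\<^sub>R ?u)))\<^sup>2 + 2 * (?v \<bullet> ?u) = (norm (?v + (1/2) *\<^sub>R ?u))\<^sup>2"
      using half_diff_sq[of ?v ?u] by (simp only: scaleR_minus_left diff_conv_add_uminus)
    moreover have "?v + (1/2) *\<^sub>R ?u = z - c" unfolding vec_eq_iff by (simp add: algebra_simps)
    ultimately show ?thesis by simp
  qed
  finally show ?thesis using power2_eq_iff_nonneg[OF norm_ge_zero norm_ge_zero] by blast
qed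

lemma side_eq: "(norm (z - c))\<^sup>2 - (norm (z - a))\<^sup>2 = 2 * ((z - (1/2) *\<^sub>R (a + c)) \<bullet> (a - c))"
proof -
  let ?u = "a - c" and ?v = "z - (1/2) *\<^sub>R (a + c)"
  have e1: "z - a = ?v - (1/2) *\<^sub>R ?u" and e2: "z - c = ?v + (1/2) *\<^sub>R ?u"
    unfolding vec_eq_iff by (simp_all add: algebra_simps)
  show ?thesis unfolding e1 e2 by (rule half_diff_sq)
qed

lemma side_iff: "norm (z - a) < norm (z - c) \<longleftrightarrow> (z - (1/2) *\<^sub>R (a + c)) \<bullet> (a - c) > 0"
proof -
  have "norm (z - a) < norm (z - c) \<longleftrightarrow> (norm (z - a))\<^sup>2 < (norm (z - c))\<^sup>2"
    by (simp add: norm_lt power2_norm_eq_inner)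
  then show ?thesis using side_eq[of z c a] by linarith
qed

lemma arefl_norm_le:
  assumes "norm c \<le> norm a" "norm (z - a) < norm (z - c)"
  shows "norm (arefl a c z) \<le> norm z"
proof -
  let ?u = "a - c" and ?v = "z - (1/2) *\<^sub>R (a + c)" and ?m = "(1/2) *\<^sub>R (a + c)"
  have s: "?v \<bullet> ?u > 0" using assms(2) side_iff by blast
  have mu: "?m \<bullet> ?u \<ge> 0"
    using assms(1) unfolding norm_le by (simp add: inner_simps inner_commute algebra_simps)
  have zz: "?v + ?m = z" by simp
  have "(norm (arefl a c z))\<^sup>2 = (norm (?v + ?m))\<^sup>2 - 2 * (2 * (?v \<bullet> ?u) / (?u \<bullet> ?u)) * (?m \<bullet> ?u)"
    unfolding arefl_def by (rule hrefl_sq)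
  also have "\<dots> \<le> (norm z)\<^sup>2"
  proof -
    have "0 \<le> 2 * (2 * (?v \<bullet> ?u) / (?u \<bullet> ?u)) * (?m \<bullet> ?u)"
      using s mu by (intro mult_nonneg_nonneg divide_nonneg_nonneg) auto
    then show ?thesis unfolding zz by linarith
  qed
  finally show ?thesis by (simp add: power2_le_iff_abs_le)
qed

lemma arefl_fix:
  assumes "\<not> norm (z - a) < norm (z - c)" "\<not> norm (arefl a c z - a) < norm (arefl a c z - c)"
  shows "arefl a c z = z"
proof -
  have 1: "norm (arefl a c z - c) = norm (z - a)"
    by (metis arefl_dist arefl_invol)
  have 2: "norm (arefl a c z - a) = norm (z - c)" by (rule arefl_dist)
  have "norm (z - a) = norm (z - c)" using assms 1 2 by linarith
  then have "(norm (z - c))\<^sup>2 - (norm (z - a))\<^sup>2 = 0" by simp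
  then have 0: "(z - (1/2) *\<^sub>R (a + c)) \<bullet> (a - c) = 0"
    using side_eq[of z c a] by linarith
  have "arefl a c z = (z - (1/2) *\<^sub>R (a + c)) + (1/2) *\<^sub>R (a + c)"
    unfolding arefl_def hrefl_fix[OF 0] ..
  then show ?thesis by simp
qed


definition pol :: "real^'n \<Rightarrow> real^'n \<Rightarrow> (real^'n \<Rightarrow> real) \<Rightarrow> real^'n \<Rightarrow> real" where
  "pol a c f z = (if norm (z - a) < norm (z - c) then max (f z) (f (arefl a c z)) else min (f z) (f (arefl a c z)))"

lemma side_swap: "norm (arefl a c z - a) < norm (arefl a c z - c) \<longleftrightarrow> norm (z - c) < norm (z - a)"
  by (metis arefl_dist arefl_invol)

lemma pol_range: "(\<And>z. 0 \<le> f z \<and> f z \<le> 1) \<Longrightarrow> 0 \<le> pol a c f z \<and> pol a c f z \<le> 1"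
  by (auto simp: pol_def max_def min_def)

lemma pol_meas:
  assumes "f \<in> borel_measurable borel"
  shows "pol a c f \<in> borel_measurable borel"
proof -
  have fR: "(\<lambda>z. f (arefl a c z)) \<in> borel_measurable borel"
    using measurable_compose[OF arefl_meas assms] by simp
  show ?thesis unfolding pol_def
    using assms fR by measurable
qed

lemma mm1: fixes A B x y :: real assumes "A \<le> B" shows "A * max x y + B * min y x \<le> A * x + B * y"
proof (cases "x \<le> y")
  case True
  have "0 \<le> (B - A) * (y - x)" using assms True by simp
  then show ?thesis using True by (simp add: max_def min_def algebra_simps)
next
  case False then show ?thesis by (simp add: max_def min_def)
qed

lemma mm2: fixes A B x y :: real assumes "B \<le> A" shows "A * max x y + B * min y x \<ge> A * y + B * x"
proof (cases "x \<le> y")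
  case True
  then show ?thesis by (simp add: max_def min_def)
next
  case False
  have "0 \<le> (A - B) * (x - y)" using assms False by simp
  then show ?thesis using False by (simp add: max_def min_def algebra_simps)
qed

lemma pol_cases:
  shows "norm (z - a) < norm (z - c) \<Longrightarrow> pol a c f z = max (f z) (f (arefl a c z)) \<and> pol a c f (arefl a c z) = min (f (arefl a c z)) (f z)"
    and "norm (z - c) < norm (z - a) \<Longrightarrow> pol a c f z = min (f z) (f (arefl a c z)) \<and> pol a c f (arefl a c z) = max (f (arefl a c z)) (f z)"
    and "norm (z - a) = norm (z - c) \<Longrightarrow> arefl a c z = z \<and> pol a c f z = f z"
proof -
  have RR: "arefl a c (arefl a c z) = z" by (rule arefl_invol)
  have sw: "norm (arefl a c z - a) < norm (arefl a c z - c) \<longleftrightarrow> norm (z - c) < norm (z - a)"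
    by (rule side_swap)
  show "norm (z - a) < norm (z - c) \<Longrightarrow> pol a c f z = max (f z) (f (arefl a c z)) \<and> pol a c f (arefl a c z) = min (f (arefl a c z)) (f z)"
    using sw RR unfolding pol_def by auto
  show "norm (z - c) < norm (z - a) \<Longrightarrow> pol a c f z = min (f z) (f (arefl a c z)) \<and> pol a c f (arefl a c z) = max (f (arefl a c z)) (f z)"
    using sw RR unfolding pol_def by auto
  assume e: "norm (z - a) = norm (z - c)"
  then have R: "arefl a c z = z" using arefl_fix[of z a c] sw by auto
  then show "arefl a c z = z \<and> pol a c f z = f z" using e unfolding pol_def by simp
qed

lemma pol_pair_le:
  assumes W: "\<And>z. norm (z - a) < norm (z - c) \<Longrightarrow> W z \<le> W (arefl a c z)"
  shows "W z * pol a c f z + W (arefl a c z) * pol a c f (arefl a c z)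
         \<le> W z * f z + W (arefl a c z) * f (arefl a c z)"
proof -
  let ?R = "arefl a c z"
  have RR: "arefl a c ?R = z" by (rule arefl_invol)
  consider (A) "norm (z - a) < norm (z - c)" | (B) "norm (z - c) < norm (z - a)"
    | (C) "norm (z - a) = norm (z - c)" by linarith
  then show ?thesis
  proof cases
    case A
    then show ?thesis using pol_cases(1)[OF A, of f] mm1[OF W[OF A], of "f z" "f ?R"] by simp
  next
    case B
    have nR: "norm (?R - a) < norm (?R - c)" using side_swap[of a c z] B by simp
    have "W ?R \<le> W z" using W[OF nR] RR by simp
    then show ?thesis using pol_cases(2)[OF B, of f] mm1[where A="W ?R" and B="W z" and x="f ?R" and y="f z"] by simp
  next
    case C
    then show ?thesis using pol_cases(3)[OF C, of f] by simp
  qed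
qed

lemma pol_pair_ge:
  assumes W: "\<And>z. norm (z - a) < norm (z - c) \<Longrightarrow> W (arefl a c z) \<le> W z"
  shows "W z * pol a c f z + W (arefl a c z) * pol a c f (arefl a c z)
         \<ge> W z * f (arefl a c z) + W (arefl a c z) * f z"
proof -
  let ?R = "arefl a c z"
  have RR: "arefl a c ?R = z" by (rule arefl_invol)
  consider (A) "norm (z - a) < norm (z - c)" | (B) "norm (z - c) < norm (z - a)"
    | (C) "norm (z - a) = norm (z - c)" by linarith
  then show ?thesis
  proof cases
    case A
    then show ?thesis using pol_cases(1)[OF A, of f] mm2[where A="W z" and B="W ?R" and x="f z" and y="f ?R"] W[OF A] by simp
  next
    case B
    have nR: "norm (?R - a) < norm (?R - c)" using side_swap[of a c z] B by simp
    have "W z \<le> W ?R" using W[OF nR] RR by simp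
    then show ?thesis using pol_cases(2)[OF B, of f] mm2[where A="W ?R" and B="W z" and x="f ?R" and y="f z"] by simp
  next
    case C
    then show ?thesis using pol_cases(3)[OF C, of f] by simp
  qed
qed


lemma arefl_meas': "arefl a c \<in> measurable lborel borel"
  using arefl_meas by simp

lemma int_arefl:
  fixes g :: "real^'n \<Rightarrow> real"
  assumes "g \<in> borel_measurable borel"
  shows "(\<integral>z. g (arefl a c z) \<partial>lborel) = (\<integral>z. g z \<partial>lborel)"
  using integral_distr[OF arefl_meas' assms, of a c] lborel_arefl[of a c] by simp

lemma integrable_arefl:
  fixes g :: "real^'n \<Rightarrow> real"
  assumes "g \<in> borel_measurable borel" "integrable lborel g"
  shows "integrable lborel (\<lambda>z. g (arefl a c z))"
  using integrable_distr_eq[OF arefl_meas' assms(1), of a c] lborel_arefl[of a c] assms(2) by simp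

lemma bounded_int:
  fixes W f :: "real^'n \<Rightarrow> real"
  assumes "f \<in> borel_measurable borel" "\<And>z. 0 \<le> f z \<and> f z \<le> 1"
    "W \<in> borel_measurable borel" "integrable lborel W" "\<And>z. 0 \<le> W z"
  shows "integrable lborel (\<lambda>z. W z * f z)"
proof (rule Bochner_Integration.integrable_bound[OF assms(4)])
  show "(\<lambda>z. W z * f z) \<in> borel_measurable lborel" using assms by simp
  show "AE z in lborel. norm (W z * f z) \<le> norm (W z)"
    using assms(2,5) by (auto simp: abs_mult intro!: mult_left_le)
qed

lemma pol_int_le:
  fixes W f :: "real^'n \<Rightarrow> real"
  assumes f: "f \<in> borel_measurable borel" "\<And>z. 0 \<le> f z \<and> f z \<le> 1"
    and W: "W \<in> borel_measurable borel" "integrable lborel W" "\<And>z. 0 \<le> W z"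
    and Wm: "\<And>z. norm (z - a) < norm (z - c) \<Longrightarrow> W z \<le> W (arefl a c z)"
  shows "(\<integral>z. W z * pol a c f z \<partial>lborel) \<le> (\<integral>z. W z * f z \<partial>lborel)"
proof -
  let ?h1 = "\<lambda>z. W z * pol a c f z" and ?h2 = "\<lambda>z. W z * f z"
  have m1: "?h1 \<in> borel_measurable borel" using pol_meas[OF f(1)] W(1) by simp
  have m2: "?h2 \<in> borel_measurable borel" using f(1) W(1) by simp
  have i1: "integrable lborel ?h1"
    by (rule bounded_int[OF pol_meas[OF f(1)] pol_range[OF f(2)] W])
  have i2: "integrable lborel ?h2" by (rule bounded_int[OF f W])
  have i1R: "integrable lborel (\<lambda>z. ?h1 (arefl a c z))" by (rule integrable_arefl[OF m1 i1])
  have i2R: "integrable lborel (\<lambda>z. ?h2 (arefl a c z))" by (rule integrable_arefl[OF m2 i2])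
  have "2 * (\<integral>z. ?h1 z \<partial>lborel) = (\<integral>z. ?h1 z \<partial>lborel) + (\<integral>z. ?h1 (arefl a c z) \<partial>lborel)"
    using int_arefl[OF m1, of a c] by simp
  also have "\<dots> = (\<integral>z. ?h1 z + ?h1 (arefl a c z) \<partial>lborel)"
    using i1 i1R by simp
  also have "\<dots> \<le> (\<integral>z. ?h2 z + ?h2 (arefl a c z) \<partial>lborel)"
    using i1 i1R i2 i2R pol_pair_le[where W=W and a=a and c=c and f=f, OF Wm] by (intro integral_mono) auto
  also have "\<dots> = (\<integral>z. ?h2 z \<partial>lborel) + (\<integral>z. ?h2 (arefl a c z) \<partial>lborel)"
    using i2 i2R by simp
  also have "\<dots> = 2 * (\<integral>z. ?h2 z \<partial>lborel)"
    using int_arefl[OF m2, of a c] by simp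
  finally show ?thesis by simp
qed

lemma pol_int_ge:
  fixes W f :: "real^'n \<Rightarrow> real"
  assumes f: "f \<in> borel_measurable borel" "\<And>z. 0 \<le> f z \<and> f z \<le> 1"
    and W: "W \<in> borel_measurable borel" "integrable lborel W" "\<And>z. 0 \<le> W z"
    and Wm: "\<And>z. norm (z - a) < norm (z - c) \<Longrightarrow> W (arefl a c z) \<le> W z"
  shows "(\<integral>z. W z * pol a c f z \<partial>lborel) \<ge> (\<integral>z. W (arefl a c z) * f z \<partial>lborel)"
proof -
  let ?h1 = "\<lambda>z. W z * pol a c f z" and ?g = "\<lambda>z. W (arefl a c z) * f z"
  have m1: "?h1 \<in> borel_measurable borel" using pol_meas[OF f(1)] W(1) by simp
  have mWR: "(\<lambda>z. W (arefl a c z)) \<in> borel_measurable borel"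
    using measurable_compose[OF arefl_meas W(1)] by simp
  have iWR: "integrable lborel (\<lambda>z. W (arefl a c z))" by (rule integrable_arefl[OF W(1,2)])
  have mg: "?g \<in> borel_measurable borel" using mWR f(1) by simp
  have i1: "integrable lborel ?h1"
    by (rule bounded_int[OF pol_meas[OF f(1)] pol_range[OF f(2)] W])
  have ig: "integrable lborel ?g" by (rule bounded_int[OF f mWR iWR W(3)])
  have i1R: "integrable lborel (\<lambda>z. ?h1 (arefl a c z))" by (rule integrable_arefl[OF m1 i1])
  have igR: "integrable lborel (\<lambda>z. ?g (arefl a c z))" by (rule integrable_arefl[OF mg ig])
  have gR: "?g (arefl a c z) = W z * f (arefl a c z)" for z by (simp add: arefl_invol)
  have "2 * (\<integral>z. ?g z \<partial>lborel) = (\<integral>z. ?g (arefl a c z) \<partial>lborel) + (\<integral>z. ?g z \<partial>lborel)"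
    using int_arefl[OF mg, of a c] by simp
  also have "\<dots> = (\<integral>z. ?g (arefl a c z) + ?g z \<partial>lborel)"
    using ig igR by simp
  also have "\<dots> \<le> (\<integral>z. ?h1 z + ?h1 (arefl a c z) \<partial>lborel)"
    using i1 i1R ig igR pol_pair_ge[where W=W and a=a and c=c and f=f, OF Wm] unfolding gR by (intro integral_mono) auto
  also have "\<dots> = (\<integral>z. ?h1 z \<partial>lborel) + (\<integral>z. ?h1 (arefl a c z) \<partial>lborel)"
    using i1 i1R by simp
  also have "\<dots> = 2 * (\<integral>z. ?h1 z \<partial>lborel)"
    using int_arefl[OF m1, of a c] by simp
  finally show ?thesis by simp
qed


lemma prod_Basis_vec: "(\<Prod>b\<in>(Basis :: (real^'n) set). h b) = (\<Prod>i\<in>UNIV. h (axis i 1))"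
  by (simp add: Basis_vec_def axis_eq_axis prod.UNION_disjoint)

lemma awgn_meas[measurable]: "awgn_lik \<sigma> x \<in> borel_measurable borel"
  unfolding awgn_lik_def[abs_def] by measurable

lemma awgn_nonneg: "0 \<le> awgn_lik \<sigma> x y"
  unfolding awgn_lik_def by (simp add: prod_nonneg)

lemma norm_sq_vec: "(norm (v::real^'n))\<^sup>2 = (\<Sum>i\<in>UNIV. (v $ i)\<^sup>2)"
  unfolding power2_norm_eq_inner inner_vec_def by (simp add: power2_eq_square)

lemma awgn_norm:
  fixes x y :: "real^'n"
  shows "awgn_lik \<sigma> x y = (1 / sqrt (2 * pi * \<sigma>\<^sup>2)) ^ CARD('n) * exp (- (norm (y - x))\<^sup>2 / (2 * \<sigma>\<^sup>2))"
proof -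
  have "awgn_lik \<sigma> x y = (\<Prod>i\<in>UNIV. 1 / sqrt (2 * pi * \<sigma>\<^sup>2) * exp (-(y $ i - x $ i)\<^sup>2 / (2 * \<sigma>\<^sup>2)))"
    by (simp add: awgn_lik_def normal_density_def)
  also have "\<dots> = (1 / sqrt (2 * pi * \<sigma>\<^sup>2)) ^ CARD('n) * (\<Prod>i\<in>UNIV. exp (-(y $ i - x $ i)\<^sup>2 / (2 * \<sigma>\<^sup>2)))"
    by (simp only: prod.distrib prod_constant)
  also have "(\<Prod>i\<in>UNIV. exp (-(y $ i - x $ i)\<^sup>2 / (2 * \<sigma>\<^sup>2))) = exp (\<Sum>i\<in>UNIV. -(y $ i - x $ i)\<^sup>2 / (2 * \<sigma>\<^sup>2))"
    by (simp add: exp_sum)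
  also have "(\<Sum>i\<in>UNIV. -(y $ i - x $ i)\<^sup>2 / (2 * \<sigma>\<^sup>2)) = - (norm (y - x))\<^sup>2 / (2 * \<sigma>\<^sup>2)"
    by (simp add: norm_sq_vec sum_divide_distrib[symmetric] sum_negf)
  finally show ?thesis .
qed

lemma nn_awgn:
  fixes x :: "real^'n"
  assumes "0 < \<sigma>"
  shows "(\<integral>\<^sup>+y. ennreal (awgn_lik \<sigma> x y) \<partial>lborel) = 1"
proof -
  have nd1: "(\<integral>\<^sup>+t. ennreal (normal_density \<mu> \<sigma> t) \<partial>lborel) = 1" for \<mu>
    using assms by (subst nn_integral_eq_integral) auto
  have "(\<lambda>y. ennreal (awgn_lik \<sigma> x y)) = (\<lambda>y. \<Prod>b\<in>Basis. ennreal (normal_density (x \<bullet> b) \<sigma> (y \<bullet> b)))"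
    by (rule ext) (simp add: awgn_lik_def prod_Basis_vec inner_axis prod_ennreal)
  then have "(\<integral>\<^sup>+y. ennreal (awgn_lik \<sigma> x y) \<partial>lborel) = (\<Prod>b\<in>(Basis :: (real^'n) set). (\<integral>\<^sup>+t. ennreal (normal_density (x \<bullet> b) \<sigma> t) \<partial>lborel))"
    using nn_integral_lborel_prod[of "\<lambda>b t. ennreal (normal_density (x \<bullet> b) \<sigma> t)"] by simp
  also have "\<dots> = 1" by (simp add: nd1)
  finally show ?thesis .
qed

lemma integrable_awgn: "0 < \<sigma> \<Longrightarrow> integrable lborel (awgn_lik \<sigma> x)"
  by (rule integrableI_nonneg) (auto simp: awgn_nonneg nn_awgn)

lemma prob_awgn: "0 < \<sigma> \<Longrightarrow> prob_space (density lborel (\<lambda>y. ennreal (awgn_lik \<sigma> x y)))"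
  by (rule prob_spaceI) (simp add: emeasure_density nn_awgn)

lemma gauss_vec_awgn: "gauss_vec \<mu> \<sigma> = density lborel (\<lambda>y. ennreal (awgn_lik \<sigma> (\<chi> i. \<mu>) y))"
  by (simp add: gauss_vec_def gauss_vec_density_def awgn_lik_def)


lemma awgn_mono:
  fixes x y x' y' :: "real^'n"
  assumes "norm (y - x) \<le> norm (y' - x')"
  shows "awgn_lik \<sigma> x' y' \<le> awgn_lik \<sigma> x y"
proof -
  have K: "0 \<le> (1 / sqrt (2 * pi * \<sigma>\<^sup>2)) ^ CARD('n)" by simp
  have "(norm (y - x))\<^sup>2 \<le> (norm (y' - x'))\<^sup>2" using assms by (simp add: power_mono)
  then have "- (norm (y' - x'))\<^sup>2 / (2 * \<sigma>\<^sup>2) \<le> - (norm (y - x))\<^sup>2 / (2 * \<sigma>\<^sup>2)"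
    by (intro divide_right_mono) auto
  then show ?thesis unfolding awgn_norm[of \<sigma> x y] awgn_norm[of \<sigma> x' y']
    using K by (intro mult_left_mono) auto
qed

lemma bounded_prob_int:
  assumes P: "prob_space P" and t: "t \<in> borel_measurable P" "\<forall>z\<in>space P. 0 \<le> t z \<and> t z \<le> (1::real)"
  shows "integral\<^sup>L P t \<le> 1"
proof -
  interpret prob_space P by fact
  have "integrable P t"
    by (rule integrable_const_bound[where B=1]) (use t in auto)
  then have "integral\<^sup>L P t \<le> integral\<^sup>L P (\<lambda>_. 1)"
    using t by (intro integral_mono) auto
  then show ?thesis using prob_space by simp
qed

lemma main_bound:
  fixes c :: "nat \<Rightarrow> real^'n" and \<sigma> \<theta> \<Upsilon> :: real and M :: nat
  assumes \<sigma>: "0 < \<sigma>" and \<theta>: "0 < \<theta>" and M: "1 \<le> M" and \<Upsilon>: "0 \<le> \<Upsilon>"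
    and feas: "\<forall>i<M. (norm (c i))\<^sup>2 \<le> real CARD('n) * \<Upsilon>"
  shows "alpha_beta (1 / real M) (gauss_vec (sqrt \<Upsilon>) \<sigma> :: (real^'n) measure) (gauss_vec 0 \<theta>) \<le> Pe \<sigma> M c"
proof -
  define a :: "real^'n" where "a = (\<chi> i. sqrt \<Upsilon>)"
  define p where "p = awgn_lik \<sigma> a"
  define q where "q = awgn_lik \<theta> (0::real^'n)"
  define A where "A = density lborel (\<lambda>y. ennreal (p y))"
  define B where "B = density lborel (\<lambda>y. ennreal (q y))"
  have A_eq: "gauss_vec (sqrt \<Upsilon>) \<sigma> = A" by (simp add: gauss_vec_awgn A_def p_def a_def)
  have B_eq: "gauss_vec 0 \<theta> = B"
  proof -
    have "(\<chi> i. 0) = (0::real^'n)" by (simp add: vec_eq_iff)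
    then show ?thesis by (simp add: gauss_vec_awgn B_def q_def)
  qed
  define D where "D i = {y. ml_decode \<sigma> M c y = i}" for i
  define f :: "nat \<Rightarrow> real^'n \<Rightarrow> real" where "f i = indicator (D i)" for i
  define T where "T z = (1 / real M) * (\<Sum>i<M. pol a (c i) (f i) z)" for z
  have Mpos: "0 < real M" using M by simp
  have na: "(norm a)\<^sup>2 = real CARD('n) * \<Upsilon>"
  proof -
    have "(norm a)\<^sup>2 = (\<Sum>i\<in>UNIV. (a $ i)\<^sup>2)" by (rule norm_sq_vec)
    also have "\<dots> = (\<Sum>i\<in>(UNIV::'n set). \<Upsilon>)" using \<Upsilon> by (simp add: a_def)
    finally show ?thesis by simp
  qed
  have nc: "norm (c i) \<le> norm a" if "i < M" for i
  proof -
    have "(norm (c i))\<^sup>2 \<le> (norm a)\<^sup>2" unfolding na using feas that by blast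
    then show ?thesis by (rule power2_le_imp_le) simp
  qed
  have Dm: "D i \<in> sets borel" for i
  proof -
    have "ml_decode \<sigma> M c \<in> measurable borel (count_space UNIV)"
      unfolding ml_decode_def[abs_def] by measurable
    then show ?thesis unfolding D_def by measurable
  qed
  have fm: "f i \<in> borel_measurable borel" for i using Dm by (simp add: f_def)
  have fr: "\<And>z. 0 \<le> f i z \<and> f i z \<le> 1" for i by (simp add: f_def indicator_def)
  have polm: "pol a (c i) (f i) \<in> borel_measurable borel" for i by (rule pol_meas[OF fm])
  have polr: "0 \<le> pol a (c i) (f i) z \<and> pol a (c i) (f i) z \<le> 1" for i z by (rule pol_range[OF fr])
  have Tm: "T \<in> borel_measurable borel" unfolding T_def using polm by measurable
  have Tr: "0 \<le> T z \<and> T z \<le> 1" for z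
  proof -
    have "(\<Sum>i<M. pol a (c i) (f i) z) \<le> (\<Sum>i<M. 1)" using polr by (intro sum_mono) auto
    moreover have "0 \<le> (\<Sum>i<M. pol a (c i) (f i) z)" using polr by (intro sum_nonneg) auto
    ultimately show ?thesis using Mpos by (auto simp: T_def field_simps)
  qed
  have pm: "p \<in> borel_measurable borel" by (simp add: p_def)
  have qm: "q \<in> borel_measurable borel" by (simp add: q_def)
  have pi: "integrable lborel p" using \<sigma> by (simp add: p_def integrable_awgn)
  have qi: "integrable lborel q" using \<theta> by (simp add: q_def integrable_awgn)
  have pn: "0 \<le> p z" for z by (simp add: p_def awgn_nonneg)
  have qn: "0 \<le> q z" for z by (simp add: q_def awgn_nonneg)
  have probA: "prob_space A" unfolding A_def p_def by (rule prob_awgn[OF \<sigma>])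
  have intB: "integral\<^sup>L B T = (1 / real M) * (\<Sum>i<M. \<integral>z. q z * pol a (c i) (f i) z \<partial>lborel)"
  proof -
    have "integral\<^sup>L B T = (\<integral>z. q z * T z \<partial>lborel)"
      unfolding B_def using Tm qm qn by (subst integral_density) auto
    also have "\<dots> = (\<integral>z. (1 / real M) * (\<Sum>i<M. q z * pol a (c i) (f i) z) \<partial>lborel)"
      by (simp add: T_def sum_distrib_left algebra_simps)
    also have "\<dots> = (1 / real M) * (\<Sum>i<M. \<integral>z. q z * pol a (c i) (f i) z \<partial>lborel)"
      using bounded_int[OF polm polr qm qi qn] by (simp add: integral_sum)
    finally show ?thesis .
  qed
  have stepB: "(\<integral>z. q z * pol a (c i) (f i) z \<partial>lborel) \<le> (\<integral>z. q z * f i z \<partial>lborel)" if "i < M" for i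
  proof (rule pol_int_le[OF fm fr qm qi qn])
    fix z assume "norm (z - a) < norm (z - c i)"
    then have "norm (arefl a (c i) z) \<le> norm z" using arefl_norm_le nc[OF that] by blast
    then show "q z \<le> q (arefl a (c i) z)" unfolding q_def by (intro awgn_mono) simp
  qed
  have sumf: "(\<Sum>i<M. f i z) \<le> 1" for z
  proof -
    have "(\<Sum>i<M. f i z) = (\<Sum>i<M. if ml_decode \<sigma> M c z = i then 1 else 0)"
      by (intro sum.cong) (auto simp: f_def D_def)
    also have "\<dots> \<le> 1" by (simp add: sum.delta)
    finally show ?thesis .
  qed
  have sizeB: "integral\<^sup>L B T \<le> 1 / real M"
  proof -
    have "(\<Sum>i<M. \<integral>z. q z * pol a (c i) (f i) z \<partial>lborel) \<le> (\<Sum>i<M. \<integral>z. q z * f i z \<partial>lborel)"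
      using stepB by (intro sum_mono) auto
    also have "\<dots> = (\<integral>z. (\<Sum>i<M. q z * f i z) \<partial>lborel)"
      using bounded_int[OF fm fr qm qi qn] by (simp add: integral_sum)
    also have "\<dots> \<le> (\<integral>z. q z \<partial>lborel)"
    proof (rule integral_mono)
      show "integrable lborel (\<lambda>z. \<Sum>i<M. q z * f i z)" using bounded_int[OF fm fr qm qi qn] by simp
      show "integrable lborel q" by (rule qi)
      fix z show "(\<Sum>i<M. q z * f i z) \<le> q z"
        using sumf[of z] qn[of z] by (simp add: sum_distrib_left[symmetric] mult_left_le)
    qed
    also have "\<dots> = 1"
      using nn_awgn[OF \<theta>, of 0] qi qn by (subst (asm) nn_integral_eq_integral) (auto simp: q_def)
    finally show ?thesis using intB Mpos by (simp add: field_simps)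
  qed
  define P where "P i = density lborel (\<lambda>y. ennreal (awgn_lik \<sigma> (c i) y))" for i
  have probP: "prob_space (P i)" for i unfolding P_def by (rule prob_awgn[OF \<sigma>])
  have measP: "measure (P i) (D i) = (\<integral>z. awgn_lik \<sigma> (c i) z * f i z \<partial>lborel)" for i
  proof -
    have "measure (P i) (D i) = integral\<^sup>L (P i) (indicator (D i))"
      by (simp add: P_def)
    also have "\<dots> = (\<integral>z. awgn_lik \<sigma> (c i) z * f i z \<partial>lborel)"
      unfolding P_def f_def using Dm by (subst integral_density) (auto simp: awgn_nonneg)
    finally show ?thesis .
  qed
  have stepA: "(\<integral>z. p z * pol a (c i) (f i) z \<partial>lborel) \<ge> measure (P i) (D i)" if "i < M" for i
  proof -
    have "(\<integral>z. p z * pol a (c i) (f i) z \<partial>lborel) \<ge> (\<integral>z. p (arefl a (c i) z) * f i z \<partial>lborel)"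
    proof (rule pol_int_ge[OF fm fr pm pi pn])
      fix z assume "norm (z - a) < norm (z - c i)"
      then have "norm (z - a) \<le> norm (arefl a (c i) z - a)" using arefl_dist[of a "c i" z] by simp
      then show "p (arefl a (c i) z) \<le> p z" unfolding p_def by (rule awgn_mono)
    qed
    moreover have "p (arefl a (c i) z) = awgn_lik \<sigma> (c i) z" for z
      unfolding p_def awgn_norm arefl_dist ..
    ultimately show ?thesis using measP by simp
  qed
  have intA: "integral\<^sup>L A T = (1 / real M) * (\<Sum>i<M. \<integral>z. p z * pol a (c i) (f i) z \<partial>lborel)"
  proof -
    have "integral\<^sup>L A T = (\<integral>z. p z * T z \<partial>lborel)"
      unfolding A_def using Tm pm pn by (subst integral_density) auto
    also have "\<dots> = (\<integral>z. (1 / real M) * (\<Sum>i<M. p z * pol a (c i) (f i) z) \<partial>lborel)"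
      by (simp add: T_def sum_distrib_left algebra_simps)
    also have "\<dots> = (1 / real M) * (\<Sum>i<M. \<integral>z. p z * pol a (c i) (f i) z \<partial>lborel)"
      using bounded_int[OF polm polr pm pi pn] by (simp add: integral_sum)
    finally show ?thesis .
  qed
  have Pe_eq: "Pe \<sigma> M c = (1 / real M) * (\<Sum>i<M. 1 - measure (P i) (D i))"
  proof -
    have "measure (P i) {y. ml_decode \<sigma> M c y \<noteq> i} = 1 - measure (P i) (D i)" for i
    proof -
      interpret prob_space "P i" by (rule probP)
      have "{y. ml_decode \<sigma> M c y \<noteq> i} = space (P i) - D i" by (auto simp: P_def D_def)
      moreover have "D i \<in> events" using Dm by (simp add: P_def)
      ultimately show ?thesis by (simp add: prob_compl)
    qed
    then show ?thesis by (simp add: Pe_def P_def)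
  qed
  have powA: "1 - integral\<^sup>L A T \<le> Pe \<sigma> M c"
  proof -
    have "(\<Sum>i<M. measure (P i) (D i)) \<le> (\<Sum>i<M. \<integral>z. p z * pol a (c i) (f i) z \<partial>lborel)"
      using stepA by (intro sum_mono) auto
    then have "(1 / real M) * (\<Sum>i<M. measure (P i) (D i)) \<le> integral\<^sup>L A T"
      unfolding intA using Mpos by (intro mult_left_mono) auto
    moreover have "(1 / real M) * (\<Sum>i<M. 1 - measure (P i) (D i)) = 1 - (1 / real M) * (\<Sum>i<M. measure (P i) (D i))"
      using Mpos by (simp add: sum_subtractf field_simps)
    ultimately show ?thesis unfolding Pe_eq by linarith
  qed
  let ?S = "{1 - integral\<^sup>L A t | t. t \<in> borel_measurable A \<and> sets B = sets A \<and> (\<forall>z \<in> space A. 0 \<le> t z \<and> t z \<le> 1)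
      \<and> integral\<^sup>L B t \<le> 1 / real M}"
  have mem: "1 - integral\<^sup>L A T \<in> ?S"
    using Tm Tr sizeB by (auto simp: A_def B_def intro!: exI[of _ T])
  have bdd: "bdd_below ?S"
  proof (rule bdd_belowI[of _ 0])
    fix x assume "x \<in> ?S"
    then obtain t where x: "x = 1 - integral\<^sup>L A t" and t: "t \<in> borel_measurable A" "\<forall>z \<in> space A. 0 \<le> t z \<and> t z \<le> 1"
      by blast
    show "0 \<le> x" using bounded_prob_int[OF probA t] x by simp
  qed
  have "alpha_beta (1 / real M) A B \<le> 1 - integral\<^sup>L A T"
    unfolding alpha_beta_def by (rule cInf_lower[OF mem bdd])
  then show ?thesis using powA A_eq B_eq by simp
qed


theorem theorem3:
  fixes \<theta> \<sigma> \<Upsilon> :: real and M :: nat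
  assumes "\<theta> \<ge> \<sigma>" and "\<sigma> > 0" and "M \<ge> 1" and "\<Upsilon> > 0"
  shows "eps_m_star TYPE('n::finite) \<sigma> M \<Upsilon>
           \<ge> alpha_beta (1 / real M)
                (gauss_vec (sqrt \<Upsilon>) \<sigma> :: (real ^ 'n) measure) (gauss_vec 0 \<theta>)"
proof -
  let ?S = "{Pe \<sigma> M (c :: nat \<Rightarrow> real ^ 'n) | c. \<forall>i<M. (norm (c i))\<^sup>2 \<le> real CARD('n) * \<Upsilon>}"
  have ne: "?S \<noteq> {}"
  proof -
    have "Pe \<sigma> M (\<lambda>_. 0 :: real^'n) \<in> ?S" using assms(4) by auto
    then show ?thesis by blast
  qed
  have "alpha_beta (1 / real M) (gauss_vec (sqrt \<Upsilon>) \<sigma> :: (real ^ 'n) measure) (gauss_vec 0 \<theta>) \<le> Inf ?S"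
  proof (rule cInf_greatest[OF ne])
    fix x assume "x \<in> ?S"
    then obtain c :: "nat \<Rightarrow> real^'n" where x: "x = Pe \<sigma> M c" and feas: "\<forall>i<M. (norm (c i))\<^sup>2 \<le> real CARD('n) * \<Upsilon>"
      by blast
    show "alpha_beta (1 / real M) (gauss_vec (sqrt \<Upsilon>) \<sigma> :: (real ^ 'n) measure) (gauss_vec 0 \<theta>) \<le> x"
      unfolding x using main_bound[OF assms(2) _ assms(3) _ feas] assms by simp
  qed
  then show ?thesis unfolding eps_m_star_def .
qed

end
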